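(* Let $\mathcal M=(M,<,+,0,\ldots)$ be a definably complete locally o-minimal expansion of an ordered abelian group. Let $C$ be a definable set, $s>0$, and let $\{f_t:C\to M\}_{0<t<s}$ be a definable family of pointwise bounded functions. Then the family is pointwise convergent.
   Context: Definable = with parameters; definably complete and locally o-minimal as standard. A definable family $\{f_t\}_{0<t<s}$ is given by a definable $F:C\times(0,s)\to M$ with $f_t(x)=F(x,t)$. It is pointwise bounded if for every $x\in C$ there is $N>0$ with $|f_t(x)|<N$ for all $t\in(0,s)$. It is pointwise convergent if for every $\varepsilon>0$ and $x\in C$ there is $s'>0$ such that $|f_t(x)-f_{t'}(x)|<\varepsilon$ for all $t,t'\in(0,s')$. *)

theory Defs
  imports Main
begin

text \<open>Definable sets (with parameters) of an expansion of an ordered abelian group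
  (M,<,+,0,...), presented as a "structure on M" in the sense of van den Dries:
  S n is the collection of definable subsets of M^n (tuples as lists of length n).
  Any expansion yields such an S, and any such S is the collection of definable
  sets of the expansion of (M,<,+) by all members of S.\<close>

definition definable_structure ::
  "(nat \<Rightarrow> ('a::linordered_ab_group_add) list set set) \<Rightarrow> bool" where
  "definable_structure S \<longleftrightarrow>
     (\<forall>n. \<forall>A\<in>S n. A \<subseteq> {xs. length xs = n}) \<and>
     (\<forall>n. {} \<in> S n) \<and>
     (\<forall>n. \<forall>A\<in>S n. \<forall>B\<in>S n. A \<union> B \<in> S n) \<and>
     (\<forall>n. \<forall>A\<in>S n. {xs. length xs = n} - A \<in> S n) \<and>
     (\<forall>n. \<forall>A\<in>S n. {xs @ [y] | xs y. xs \<in> A} \<in> S (Suc n)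
                   \<and> {y # xs | xs y. xs \<in> A} \<in> S (Suc n)) \<and>
     (\<forall>n i j. i < n \<and> j < n \<longrightarrow> {xs. length xs = n \<and> xs ! i = xs ! j} \<in> S n) \<and>
     (\<forall>n. \<forall>A\<in>S (Suc n). butlast ` A \<in> S n) \<and>
     (\<forall>a. {[a]} \<in> S 1) \<and>
     {[x, y] | x y. x < y} \<in> S 2 \<and>
     {[x, y, x + y] | x y. True} \<in> S 3"

definition definably_complete ::
  "(nat \<Rightarrow> ('a::linordered_ab_group_add) list set set) \<Rightarrow> bool" where
  "definably_complete S \<longleftrightarrow>
     (\<forall>A\<in>S 1. let X = {x. [x] \<in> A} in
        X \<noteq> {} \<and> (\<exists>b. \<forall>x\<in>X. x \<le> b) \<longrightarrow>
        (\<exists>b. (\<forall>x\<in>X. x \<le> b) \<and> (\<forall>c. (\<forall>x\<in>X. x \<le> c) \<longrightarrow> b \<le> c)))"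

definition finite_union_points_intervals :: "('a::linorder) set \<Rightarrow> bool" where
  "finite_union_points_intervals Y \<longleftrightarrow>
     (\<exists>P Q. finite P \<and> finite Q \<and> Y = P \<union> (\<Union>(c, d)\<in>Q. {c<..<d}))"

definition locally_o_minimal ::
  "(nat \<Rightarrow> ('a::linordered_ab_group_add) list set set) \<Rightarrow> bool" where
  "locally_o_minimal S \<longleftrightarrow>
     (\<forall>A\<in>S 1. \<forall>a. \<exists>c d. c < a \<and> a < d \<and>
        finite_union_points_intervals ({x. [x] \<in> A} \<inter> {c<..<d}))"

end

theory Submission
  imports Defs
begin


definition dset :: "nat \<Rightarrow> ('a list \<Rightarrow> bool) \<Rightarrow> 'a list set" where
  "dset m P = {ys. length ys = m \<and> P ys}"

lemma mem_dset[simp]: "ys \<in> dset m P \<longleftrightarrow> length ys = m \<and> P ys"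
  by (simp add: dset_def)

locale ds =
  fixes S :: "nat \<Rightarrow> ('a::linordered_ab_group_add) list set set"
  assumes DS: "definable_structure S"
begin

lemmas D0 = DS[unfolded definable_structure_def]
lemmas ax_len = D0[THEN conjunct1]
lemmas ax_empty = D0[THEN conjunct2, THEN conjunct1]
lemmas ax_un = D0[THEN conjunct2, THEN conjunct2, THEN conjunct1]
lemmas ax_compl = D0[THEN conjunct2, THEN conjunct2, THEN conjunct2, THEN conjunct1]
lemmas ax_cyl = D0[THEN conjunct2, THEN conjunct2, THEN conjunct2, THEN conjunct2, THEN conjunct1]
lemmas ax_diag = D0[THEN conjunct2, THEN conjunct2, THEN conjunct2, THEN conjunct2, THEN conjunct2, THEN conjunct1]
lemmas ax_proj = D0[THEN conjunct2, THEN conjunct2, THEN conjunct2, THEN conjunct2, THEN conjunct2, THEN conjunct2, THEN conjunct1]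
lemmas ax_pt = D0[THEN conjunct2, THEN conjunct2, THEN conjunct2, THEN conjunct2, THEN conjunct2, THEN conjunct2, THEN conjunct2, THEN conjunct1]
lemmas ax_less = D0[THEN conjunct2, THEN conjunct2, THEN conjunct2, THEN conjunct2, THEN conjunct2, THEN conjunct2, THEN conjunct2, THEN conjunct2, THEN conjunct1]
lemmas ax_plus = D0[THEN conjunct2, THEN conjunct2, THEN conjunct2, THEN conjunct2, THEN conjunct2, THEN conjunct2, THEN conjunct2, THEN conjunct2, THEN conjunct2]

lemma sub: "A \<in> S n \<Longrightarrow> A = dset n (\<lambda>ys. ys \<in> A)"
  using ax_len unfolding dset_def by blast

lemma cong: "dset m P \<in> S m \<Longrightarrow> (\<And>ys. length ys = m \<Longrightarrow> P ys = Q ys) \<Longrightarrow> dset m Q \<in> S m"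
proof -
  assume a: "dset m P \<in> S m" and b: "\<And>ys. length ys = m \<Longrightarrow> P ys = Q ys"
  have "dset m P = dset m Q" using b by (auto simp: dset_def)
  thus ?thesis using a by simp
qed

lemma dtrue: "dset m (\<lambda>_. True) \<in> S m"
proof -
  have "{xs. length xs = m} - {} \<in> S m" using ax_compl ax_empty by blast
  moreover have "{xs. length xs = m} - {} = dset m (\<lambda>_. True)" by (auto simp: dset_def)
  ultimately show ?thesis by metis
qed

lemma dnot: "dset m P \<in> S m \<Longrightarrow> dset m (\<lambda>ys. \<not> P ys) \<in> S m"
proof -
  assume a: "dset m P \<in> S m"
  have "{xs. length xs = m} - dset m P \<in> S m" using ax_compl a by blast
  moreover have "{xs. length xs = m} - dset m P = dset m (\<lambda>ys. \<not> P ys)" by (auto simp: dset_def)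
  ultimately show ?thesis by metis
qed

lemma dor: "dset m P \<in> S m \<Longrightarrow> dset m Q \<in> S m \<Longrightarrow> dset m (\<lambda>ys. P ys \<or> Q ys) \<in> S m"
proof -
  assume a: "dset m P \<in> S m" "dset m Q \<in> S m"
  have "dset m P \<union> dset m Q \<in> S m" using ax_un a by blast
  moreover have "dset m P \<union> dset m Q = dset m (\<lambda>ys. P ys \<or> Q ys)" by (auto simp: dset_def)
  ultimately show ?thesis by metis
qed

lemma dand: "dset m P \<in> S m \<Longrightarrow> dset m Q \<in> S m \<Longrightarrow> dset m (\<lambda>ys. P ys \<and> Q ys) \<in> S m"
proof -
  assume a: "dset m P \<in> S m" "dset m Q \<in> S m"
  have "dset m (\<lambda>ys. \<not> (\<not> P ys \<or> \<not> Q ys)) \<in> S m" using a by (intro dnot dor)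
  thus ?thesis by (rule cong) auto
qed

lemma dex: "dset (Suc m) P \<in> S (Suc m) \<Longrightarrow> dset m (\<lambda>ys. \<exists>y. P (ys @ [y])) \<in> S m"
proof -
  assume a: "dset (Suc m) P \<in> S (Suc m)"
  have "butlast ` dset (Suc m) P \<in> S m" using ax_proj a by blast
  moreover have "butlast ` dset (Suc m) P = dset m (\<lambda>ys. \<exists>y. P (ys @ [y]))"
  proof (rule set_eqI, rule iffI)
    fix z assume "z \<in> butlast ` dset (Suc m) P"
    then obtain w where w: "length w = Suc m" "P w" "z = butlast w" by auto
    then have "w = butlast w @ [last w]" by (metis append_butlast_last_id list.size(3) nat.simps(3))
    thus "z \<in> dset m (\<lambda>ys. \<exists>y. P (ys @ [y]))" using w by (auto, metis)
  next
    fix z assume "z \<in> dset m (\<lambda>ys. \<exists>y. P (ys @ [y]))"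
    then obtain y where "length z = m" "P (z @ [y])" by auto
    thus "z \<in> butlast ` dset (Suc m) P" by (intro image_eqI[where x="z @ [y]"]) auto
  qed
  ultimately show ?thesis by metis
qed

lemma dexc: "dset m P \<in> S m \<Longrightarrow> m = Suc k \<Longrightarrow> (\<And>ys. length ys = k \<Longrightarrow> (\<exists>y. P (ys @ [y])) = Q ys) \<Longrightarrow> dset k Q \<in> S k"
  using dex cong by blast

lemma dexs: "dset (m + j) P \<in> S (m + j) \<Longrightarrow>
   dset m (\<lambda>ys. \<exists>zs. length zs = j \<and> P (ys @ zs)) \<in> S m"
proof (induction j arbitrary: P)
  case 0
  then have "dset m P \<in> S m" by simp
  then show ?case by (rule cong) auto
next
  case (Suc j)
  have "dset (m + j) (\<lambda>ys. \<exists>y. P (ys @ [y])) \<in> S (m + j)"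
    using Suc.prems by (intro dex) simp
  from Suc.IH[OF this] show ?case
  proof (rule cong)
    fix ys :: "'a list"
    assume "length ys = m"
    show "(\<exists>zs. length zs = j \<and> (\<exists>y. P ((ys @ zs) @ [y]))) = (\<exists>zs. length zs = Suc j \<and> P (ys @ zs))"
    proof
      assume "\<exists>zs. length zs = j \<and> (\<exists>y. P ((ys @ zs) @ [y]))"
      then obtain zs y where "length zs = j" "P (ys @ zs @ [y])" by auto
      thus "\<exists>zs. length zs = Suc j \<and> P (ys @ zs)" by (intro exI[of _ "zs @ [y]"]) auto
    next
      assume "\<exists>zs. length zs = Suc j \<and> P (ys @ zs)"
      then obtain zs where z: "length zs = Suc j" "P (ys @ zs)" by blast
      then obtain us u where "zs = us @ [u]" by (metis append_butlast_last_id list.size(3) nat.simps(3))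
      thus "\<exists>zs. length zs = j \<and> (\<exists>y. P ((ys @ zs) @ [y]))" using z by auto
    qed
  qed
qed

lemma dcyl: "dset m P \<in> S m \<Longrightarrow> dset (j + m) (\<lambda>ys. P (drop j ys)) \<in> S (j + m)"
proof (induction j)
  case 0
  then show ?case by simp
next
  case (Suc j)
  have A: "dset (j + m) (\<lambda>ys. P (drop j ys)) \<in> S (j + m)" using Suc by blast
  have "{y # xs | xs y. xs \<in> dset (j + m) (\<lambda>ys. P (drop j ys))} \<in> S (Suc (j + m))"
    using ax_cyl A by blast
  moreover have "{y # xs | xs y. xs \<in> dset (j + m) (\<lambda>ys. P (drop j ys))} = dset (Suc j + m) (\<lambda>ys. P (drop (Suc j) ys))"
  proof (rule set_eqI, rule iffI)
    fix w assume "w \<in> dset (Suc j + m) (\<lambda>ys. P (drop (Suc j) ys))"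
    then show "w \<in> {y # xs | xs y. xs \<in> dset (j + m) (\<lambda>ys. P (drop j ys))}"
      by (cases w) auto
  qed auto
  ultimately show ?case by simp
qed

lemma ddiag: "i < m \<Longrightarrow> j < m \<Longrightarrow> dset m (\<lambda>ys. ys ! i = ys ! j) \<in> S m"
proof -
  assume "i < m" "j < m"
  hence "{xs. length xs = m \<and> xs ! i = xs ! j} \<in> S m" using ax_diag by blast
  thus ?thesis by (simp add: dset_def)
qed

lemma dall: "(\<And>i. i < (k::nat) \<Longrightarrow> dset m (Q i) \<in> S m) \<Longrightarrow> dset m (\<lambda>ys. \<forall>i<k. Q i ys) \<in> S m"
proof (induction k)
  case 0
  show ?case by (rule cong[OF dtrue]) auto
next
  case (Suc k)
  have "dset m (\<lambda>ys. (\<forall>i<k. Q i ys) \<and> Q k ys) \<in> S m" using Suc by (intro dand) auto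
  thus ?case by (rule cong) (auto simp: less_Suc_eq)
qed

lemma dpull:
  assumes B: "dset k P \<in> S k" and sig: "\<And>i. i < k \<Longrightarrow> \<sigma> i < m"
  shows "dset m (\<lambda>ys. P (map (\<lambda>i. ys ! \<sigma> i) [0..<k])) \<in> S m"
proof -
  have c: "dset (m + k) (\<lambda>ws. P (drop m ws)) \<in> S (m + k)" using dcyl[OF B, of m] by (simp add: add.commute)
  have d: "dset (m + k) (\<lambda>ws. \<forall>i<k. ws ! (m + i) = ws ! \<sigma> i) \<in> S (m + k)"
    using sig by (intro dall ddiag) (auto simp: trans_less_add1)
  have "dset m (\<lambda>ys. \<exists>zs. length zs = k \<and> (P (drop m (ys @ zs)) \<and> (\<forall>i<k. (ys @ zs) ! (m + i) = (ys @ zs) ! \<sigma> i))) \<in> S m"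
    by (rule dexs, rule dand[OF c d])
  thus ?thesis
  proof (rule cong)
    fix ys :: "'a list" assume ly: "length ys = m"
    show "(\<exists>zs. length zs = k \<and> P (drop m (ys @ zs)) \<and> (\<forall>i<k. (ys @ zs) ! (m + i) = (ys @ zs) ! \<sigma> i))
       = P (map (\<lambda>i. ys ! \<sigma> i) [0..<k])"
    proof
      assume "\<exists>zs. length zs = k \<and> P (drop m (ys @ zs)) \<and> (\<forall>i<k. (ys @ zs) ! (m + i) = (ys @ zs) ! \<sigma> i)"
      then obtain zs where z: "length zs = k" "P (drop m (ys @ zs))" "\<forall>i<k. (ys @ zs) ! (m + i) = (ys @ zs) ! \<sigma> i" by blast
      have "zs = map (\<lambda>i. ys ! \<sigma> i) [0..<k]"
      proof (rule nth_equalityI)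
        fix i assume "i < length zs"
        thus "zs ! i = map (\<lambda>i. ys ! \<sigma> i) [0..<k] ! i"
          using z(3) z(1) sig ly by (auto simp: nth_append)
      qed (simp add: z)
      thus "P (map (\<lambda>i. ys ! \<sigma> i) [0..<k])" using z ly by simp
    next
      assume "P (map (\<lambda>i. ys ! \<sigma> i) [0..<k])"
      thus "\<exists>zs. length zs = k \<and> P (drop m (ys @ zs)) \<and> (\<forall>i<k. (ys @ zs) ! (m + i) = (ys @ zs) ! \<sigma> i)"
        using ly sig by (intro exI[of _ "map (\<lambda>i. ys ! \<sigma> i) [0..<k]"]) (auto simp: nth_append)
    qed
  qed
qed

lemma len2: "length ys = 2 \<Longrightarrow> ys = [ys!0, ys!1]"
  by (cases ys; cases "tl ys"; auto)
lemma len3: "length ys = 3 \<Longrightarrow> ys = [ys!0, ys!1, ys!2]"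
  by (cases ys; cases "tl ys"; cases "tl (tl ys)"; auto)
lemma len1: "length ys = 1 \<Longrightarrow> ys = [ys!0]"
  by (cases ys; auto)

lemma dless0: "dset 2 (\<lambda>ys. ys!0 < ys!1) \<in> S 2"
proof -
  have "{[x, y] | x y. x < y} \<in> S 2" by (rule ax_less)
  moreover have "{[x, y] | x y. (x::'a) < y} = dset 2 (\<lambda>ys. ys!0 < ys!1)"
  proof (rule set_eqI, rule iffI)
    fix ys :: "'a list" assume "ys \<in> dset 2 (\<lambda>ys. ys!0 < ys!1)"
    hence "length ys = 2" "ys!0 < ys!1" by auto
    thus "ys \<in> {[x, y] | x y. x < y}" using len2 by blast
  qed auto
  ultimately show ?thesis by metis
qed

lemma dplus0: "dset 3 (\<lambda>ys. ys!0 + ys!1 = ys!2) \<in> S 3"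
proof -
  have "{[x, y, x + y] | x y. True} \<in> S 3" by (rule ax_plus)
  moreover have "{[x, y, x + y] | x y. True} = dset 3 (\<lambda>ys. ys!0 + ys!1 = (ys!2::'a))"
  proof (rule set_eqI, rule iffI)
    fix ys :: "'a list" assume "ys \<in> dset 3 (\<lambda>ys. ys!0 + ys!1 = ys!2)"
    hence "length ys = 3" "ys!0 + ys!1 = ys!2" by auto
    hence "ys = [ys!0, ys!1, ys!0 + ys!1]" using len3 by metis
    thus "ys \<in> {[x, y, x + y] | x y. True}" by blast
  qed auto
  ultimately show ?thesis by metis
qed

lemma dconst0: "dset 1 (\<lambda>ys. ys!0 = a) \<in> S 1"
proof -
  have "{[a]} \<in> S 1" using ax_pt by blast
  moreover have "{[a]} = dset 1 (\<lambda>ys. ys!0 = a)"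
  proof (rule set_eqI, rule iffI)
    fix ys :: "'a list" assume "ys \<in> dset 1 (\<lambda>ys. ys!0 = a)"
    hence "length ys = 1" "ys!0 = a" by auto
    thus "ys \<in> {[a]}" using len1 by (metis singletonI)
  qed auto
  ultimately show ?thesis by metis
qed

lemma dless: "i < m \<Longrightarrow> j < m \<Longrightarrow> dset m (\<lambda>ys. ys!i < ys!j) \<in> S m"
  using dpull[OF dless0, of "\<lambda>l. if l = 0 then i else j" m] by (rule cong) auto

lemma dconst: "i < m \<Longrightarrow> dset m (\<lambda>ys. ys!i = a) \<in> S m"
  using dpull[OF dconst0, of "\<lambda>l. i" m] by (rule cong) auto

lemma dlessc: "i < m \<Longrightarrow> dset m (\<lambda>ys. ys!i < a) \<in> S m"
proof -
  assume i: "i < m"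
  have "dset (Suc m) (\<lambda>ys. ys!m = a \<and> ys!i < ys!m) \<in> S (Suc m)"
    using i by (intro dand dconst dless) auto
  from dex[OF this] show ?thesis by (rule cong) (auto simp: nth_append i)
qed

lemma dcless: "i < m \<Longrightarrow> dset m (\<lambda>ys. a < ys!i) \<in> S m"
proof -
  assume i: "i < m"
  have "dset (Suc m) (\<lambda>ys. ys!m = a \<and> ys!m < ys!i) \<in> S (Suc m)"
    using i by (intro dand dconst dless) auto
  from dex[OF this] show ?thesis by (rule cong) (auto simp: nth_append i)
qed

lemma dsubst:
  assumes "dset (m + j) P \<in> S (m + j)" and "length x = j"
  shows "dset m (\<lambda>ys. P (ys @ x)) \<in> S m"
proof -
  have "dset (m + j) (\<lambda>ws. P ws \<and> (\<forall>i<j. ws ! (m + i) = x ! i)) \<in> S (m + j)"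
    by (intro dand assms dall dconst) auto
  from dexs[OF this] show ?thesis
  proof (rule cong)
    fix ys :: "'a list" assume ly: "length ys = m"
    show "(\<exists>zs. length zs = j \<and> P (ys @ zs) \<and> (\<forall>i<j. (ys @ zs) ! (m + i) = x ! i)) = P (ys @ x)"
    proof
      assume "\<exists>zs. length zs = j \<and> P (ys @ zs) \<and> (\<forall>i<j. (ys @ zs) ! (m + i) = x ! i)"
      then obtain zs where z: "length zs = j" "P (ys @ zs)" "\<forall>i<j. (ys @ zs) ! (m + i) = x ! i" by blast
      have "zs = x" using z ly assms(2) by (intro nth_equalityI) (auto simp: nth_append)
      thus "P (ys @ x)" using z by simp
    qed (use ly assms(2) in \<open>auto simp: nth_append\<close>)
  qed
qed

end


lemma fupi_at0:
  fixes Y :: "'a::linordered_ab_group_add set"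
  assumes c0: "c0 < 0" and d0: "0 < d0" and f: "finite_union_points_intervals (Y \<inter> {c0<..<d0})"
  shows "\<exists>e>0. (\<forall>t. 0 < t \<and> t < e \<longrightarrow> t \<in> Y) \<or> (\<forall>t. 0 < t \<and> t < e \<longrightarrow> t \<notin> Y)"
proof -
  obtain P Q where PQ: "finite P" "finite Q" "Y \<inter> {c0<..<d0} = P \<union> (\<Union>(c, d)\<in>Q. {c<..<d})"
    using f unfolding finite_union_points_intervals_def by blast
  define E where "E = insert d0 ({p\<in>P. 0 < p} \<union> {c\<in>fst ` Q. 0 < c} \<union> {d\<in>snd ` Q. 0 < d})"
  have fin: "finite E" using PQ unfolding E_def by auto
  define e where "e = Min E"
  have epos: "0 < e" unfolding e_def using fin d0 by (subst Min_gr_iff) (auto simp: E_def)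
  have eb: "\<And>z. z \<in> E \<Longrightarrow> e \<le> z" unfolding e_def using fin by simp
  have key: "t \<in> Y \<longleftrightarrow> (\<exists>(c, d)\<in>Q. c \<le> 0 \<and> e \<le> d)" if t: "0 < t" "t < e" for t
  proof -
    have "t < d0" using t eb[of d0] by (auto simp: E_def)
    hence "t \<in> Y \<longleftrightarrow> t \<in> P \<union> (\<Union>(c, d)\<in>Q. {c<..<d})" using t c0 PQ(3)[symmetric]
      by (metis Int_iff greaterThanLessThan_iff order_less_trans)
    also have "\<dots> \<longleftrightarrow> (\<exists>(c, d)\<in>Q. c \<le> 0 \<and> e \<le> d)"
    proof
      assume "t \<in> P \<union> (\<Union>(c, d)\<in>Q. {c<..<d})"
      moreover have "t \<notin> P" using t eb[of t] by (auto simp: E_def)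
      ultimately obtain c d where cd: "(c, d) \<in> Q" "c < t" "t < d" by auto
      have "\<not> 0 < c" using cd t eb[of c] by (force simp: E_def)
      moreover have "e \<le> d" using cd t eb[of d] by (force simp: E_def)
      ultimately show "\<exists>(c, d)\<in>Q. c \<le> 0 \<and> e \<le> d" using cd by (auto simp: not_less)
    next
      assume "\<exists>(c, d)\<in>Q. c \<le> 0 \<and> e \<le> d"
      then obtain c d where "(c, d) \<in> Q" "c \<le> 0" "e \<le> d" by auto
      thus "t \<in> P \<union> (\<Union>(c, d)\<in>Q. {c<..<d})" using t by force
    qed
    finally show ?thesis .
  qed
  show ?thesis
    using key epos by (cases "\<exists>(c, d)\<in>Q. c \<le> 0 \<and> e \<le> d") blast+
qed

lemma abs_bound:
  fixes y N :: "'a::{linordered_ab_group_add,abs_if}"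
  assumes "\<bar>y\<bar> < N"
  shows "- N < y \<and> y < N"
proof (cases "y < 0")
  case True
  hence "- y < N" using assms by (simp add: abs_if)
  moreover have "0 < - y" using True by simp
  ultimately have "0 < N" by (meson order_less_trans)
  hence "y < N" using True by (rule order_less_trans[rotated])
  moreover have "- N < y" using \<open>- y < N\<close> by (simp add: minus_less_iff)
  ultimately show ?thesis by simp
next
  case False
  hence "y < N" using assms by (simp add: abs_if)
  moreover have "- N < 0" using False \<open>y < N\<close> by (simp add: not_less)
  moreover have "0 \<le> y" using False by (simp add: not_less)
  ultimately show ?thesis using order_less_le_trans by blast
qed

lemma absdiff:
  fixes a u v d eps :: "'a::{linordered_ab_group_add,abs_if}"
  assumes "a - d < u" "u \<le> a + d" "a - d < v" "v \<le> a + d" "d + d \<le> eps"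
  shows "\<bar>u - v\<bar> < eps"
proof -
  have e: "(a + d) - (a - d) = d + d" by (simp add: algebra_simps)
  have "u - v \<le> (a + d) - v" using assms(2) by (rule diff_right_mono)
  also have "\<dots> < (a + d) - (a - d)" using assms(3) by (rule diff_strict_left_mono)
  finally have 1: "u - v < eps" using e assms(5) by simp
  have "v - u \<le> (a + d) - u" using assms(4) by (rule diff_right_mono)
  also have "\<dots> < (a + d) - (a - d)" using assms(1) by (rule diff_strict_left_mono)
  finally have 2: "v - u < eps" using e assms(5) by simp
  show ?thesis using 1 2 by (simp add: abs_if)
qed


theorem mainTheorem9:
  fixes S :: "nat \<Rightarrow> ('a::{linordered_ab_group_add,abs_if}) list set set"
    and C :: "'a list set" and n :: nat and s :: 'a
    and F :: "'a list \<Rightarrow> 'a \<Rightarrow> 'a"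
  assumes "definable_structure S"
    and "definably_complete S"
    and "locally_o_minimal S"
    and "C \<in> S n"
    and "0 < s"
    and "{xs @ [t, F xs t] | xs t. xs \<in> C \<and> 0 < t \<and> t < s} \<in> S (n + 2)"
    and "\<forall>x\<in>C. \<exists>N>0. \<forall>t. 0 < t \<and> t < s \<longrightarrow> \<bar>F x t\<bar> < N"
  shows "\<forall>\<epsilon>>0. \<forall>x\<in>C. \<exists>s'>0. s' \<le> s \<and>
           (\<forall>t t'. 0 < t \<and> t < s' \<and> 0 < t' \<and> t' < s' \<longrightarrow> \<bar>F x t - F x t'\<bar> < \<epsilon>)"
proof (intro allI impI ballI)
  fix \<epsilon> :: 'a and x assume eps: "0 < \<epsilon>" and x: "x \<in> C"
  show "\<exists>s'>0. s' \<le> s \<and>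
           (\<forall>t t'. 0 < t \<and> t < s' \<and> 0 < t' \<and> t' < s' \<longrightarrow> \<bar>F x t - F x t'\<bar> < \<epsilon>)"
  proof (cases "\<exists>z>0. \<not> (\<exists>r. 0 < r \<and> r < (z::'a))")
    case True
    then obtain z :: 'a where z: "0 < z" "\<And>r. \<not> (0 < r \<and> r < z)" by blast
    show ?thesis
      using z assms(5) by (intro exI[of _ "min s z"]) auto
  next
    case False
    hence dense: "\<And>z::'a. 0 < z \<Longrightarrow> \<exists>r. 0 < r \<and> r < z" by blast
    interpret ds S using assms(1) by unfold_locales
    have lx: "length x = n" using ax_len assms(4) x by blast
    define G where "G = {xs @ [t, F xs t] | xs t. xs \<in> C \<and> 0 < t \<and> t < s}"
    have memG: "x @ [a, b] \<in> G \<longleftrightarrow> 0 < a \<and> a < s \<and> b = F x a" for a b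
    proof
      assume "x @ [a, b] \<in> G"
      then obtain xs t where h: "x @ [a, b] = xs @ [t, F xs t]" "xs \<in> C" "0 < t" "t < s"
        unfolding G_def by blast
      have "length xs = n" using ax_len assms(4) h(2) by blast
      hence "xs = x \<and> [a, b] = [t, F xs t]" using h(1) lx by (simp add: append_eq_append_conv)
      thus "0 < a \<and> a < s \<and> b = F x a" using h by auto
    next
      assume "0 < a \<and> a < s \<and> b = F x a"
      thus "x @ [a, b] \<in> G" unfolding G_def using x by blast
    qed
    have G0: "dset (n + 2) (\<lambda>v. v \<in> G) \<in> S (n + 2)"
    proof -
      have h: "G \<in> S (n + 2)" using assms(6) unfolding G_def .
      have e: "dset (n + 2) (\<lambda>v. v \<in> G) = G" using sub[OF h] by (rule sym)
      show ?thesis using h unfolding e .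
    qed
    define \<sigma> where "\<sigma> = (\<lambda>l::nat. if l < n then 2 + l else l - n)"
    have G1: "dset (2 + n) (\<lambda>ws. map (\<lambda>l. ws ! \<sigma> l) [0..<n + 2] \<in> G) \<in> S (2 + n)"
      by (rule dpull[OF G0]) (auto simp: \<sigma>_def)
    have G2: "dset 2 (\<lambda>ys. map (\<lambda>l. (ys @ x) ! \<sigma> l) [0..<n + 2] \<in> G) \<in> S 2"
      by (rule dsubst[OF G1 lx])
    have Gx: "dset 2 (\<lambda>w. 0 < w!0 \<and> w!0 < s \<and> w!1 = F x (w!0)) \<in> S 2"
      using G2
    proof (rule cong)
      fix ys :: "'a list" assume ly: "length ys = 2"
      have "map (\<lambda>l. (ys @ x) ! \<sigma> l) [0..<n + 2] = x @ [ys!0, ys!1]"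
      proof (rule nth_equalityI)
        fix i assume "i < length (map (\<lambda>l. (ys @ x) ! \<sigma> l) [0..<n + 2])"
        hence i: "i < n + 2" by simp
        consider "i < n" | "i = n" | "i = n + 1" using i by linarith
        thus "map (\<lambda>l. (ys @ x) ! \<sigma> l) [0..<n + 2] ! i = (x @ [ys!0, ys!1]) ! i"
          by cases (use i ly lx in \<open>auto simp: \<sigma>_def nth_append\<close>)
      qed (simp add: lx)
      thus "(map (\<lambda>l. (ys @ x) ! \<sigma> l) [0..<n + 2] \<in> G) = (0 < ys!0 \<and> ys!0 < s \<and> ys!1 = F x (ys!0))"
        using memG by simp
    qed
    have R4: "dset 4 (\<lambda>w. (0 < w!2 \<and> w!2 < s \<and> w!3 = F x (w!2)) \<and> w!2 < w!1 \<and> \<not> w!0 < w!3) \<in> S 4"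
    proof -
      have "dset 4 (\<lambda>w. 0 < w!2 \<and> w!2 < s \<and> w!3 = F x (w!2)) \<in> S 4"
        using dpull[OF Gx, of "\<lambda>l. if l = 0 then 2 else 3" 4] by (rule cong) auto
      thus ?thesis by (rule dand[OF _ dand[OF dless dnot[OF dless]]]) auto
    qed
    have E3: "dset 3 (\<lambda>w. 0 < w!2 \<and> w!2 < s \<and> w!2 < w!1 \<and> \<not> w!0 < F x (w!2)) \<in> S 3"
      by (rule dexc[OF R4]) (auto simp: nth_append)
    have E2: "dset 2 (\<lambda>w. \<exists>t. 0 < t \<and> t < s \<and> t < w!1 \<and> \<not> w!0 < F x t) \<in> S 2"
      by (rule dexc[OF E3]) (auto simp: nth_append)
    have E2': "dset 2 (\<lambda>w. 0 < w!1 \<and> \<not> (\<exists>t. 0 < t \<and> t < s \<and> t < w!1 \<and> \<not> w!0 < F x t)) \<in> S 2"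
      by (intro dand dnot E2 dcless) auto
    have Aset: "dset 1 (\<lambda>w. \<exists>e>0. \<forall>t. 0 < t \<and> t < e \<and> t < s \<longrightarrow> w!0 < F x t) \<in> S 1"
      by (rule dexc[OF E2']) (auto simp: nth_append)
    have Xc: "dset 1 (\<lambda>w. 0 < w!0 \<and> w!0 < s \<and> c < F x (w!0)) \<in> S 1" for c
    proof -
      have "dset 2 (\<lambda>w. (0 < w!0 \<and> w!0 < s \<and> w!1 = F x (w!0)) \<and> c < w!1) \<in> S 2"
        by (intro dand Gx dcless) auto
      thus ?thesis by (rule dexc) (auto simp: nth_append)
    qed
    define A where "A = {c. \<exists>e>0. \<forall>t. 0 < t \<and> t < e \<and> t < s \<longrightarrow> c < F x t}"
    have Aeq: "{c. [c] \<in> dset 1 (\<lambda>w. \<exists>e>0. \<forall>t. 0 < t \<and> t < e \<and> t < s \<longrightarrow> w!0 < F x t)} = A"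
      unfolding A_def by simp
    obtain N where N: "N > 0" "\<And>t. 0 < t \<and> t < s \<Longrightarrow> \<bar>F x t\<bar> < N" using assms(7) x by blast
    have "- N \<in> A" unfolding A_def
    proof (intro CollectI exI[of _ s] conjI allI impI assms(5))
      fix t assume "0 < t \<and> t < s \<and> t < s"
      hence "\<bar>F x t\<bar> < N" using N by blast
      thus "- N < F x t" using abs_bound by blast
    qed
    moreover have ub: "c \<le> N" if cA: "c \<in> A" for c
    proof -
      obtain e where e: "e > 0" "\<forall>t. 0 < t \<and> t < e \<and> t < s \<longrightarrow> c < F x t" using cA A_def by blast
      obtain r where r: "0 < r" "r < min e s" using dense[of "min e s"] e(1) assms(5) by auto
      have "c < F x r" using e r by auto
      moreover have "\<bar>F x r\<bar> < N" using N(2)[of r] r by simp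
      hence "F x r < N" using abs_bound by blast
      ultimately show ?thesis by simp
    qed
    ultimately have ne: "A \<noteq> {} \<and> (\<exists>b. \<forall>c\<in>A. c \<le> b)" by blast
    have "let X = {c. [c] \<in> dset 1 (\<lambda>w. \<exists>e>0. \<forall>t. 0 < t \<and> t < e \<and> t < s \<longrightarrow> w!0 < F x t)} in
        X \<noteq> {} \<and> (\<exists>b. \<forall>x\<in>X. x \<le> b) \<longrightarrow>
        (\<exists>b. (\<forall>x\<in>X. x \<le> b) \<and> (\<forall>c. (\<forall>x\<in>X. x \<le> c) \<longrightarrow> b \<le> c))"
      using assms(2) Aset unfolding definably_complete_def by (rule bspec)
    hence "A \<noteq> {} \<and> (\<exists>b. \<forall>x\<in>A. x \<le> b) \<longrightarrow>
        (\<exists>b. (\<forall>x\<in>A. x \<le> b) \<and> (\<forall>c. (\<forall>x\<in>A. x \<le> c) \<longrightarrow> b \<le> c))"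
      unfolding Aeq Let_def .
    then obtain a where a1: "\<And>c. c \<in> A \<Longrightarrow> c \<le> a" and a2: "\<And>b. (\<forall>c\<in>A. c \<le> b) \<Longrightarrow> a \<le> b"
      using ne by blast
    obtain r where r: "0 < r" "r < \<epsilon>" using dense eps by blast
    define \<delta> where "\<delta> = min r (\<epsilon> - r)"
    have dpos: "0 < \<delta>" using r by (simp add: \<delta>_def)
    have dd: "\<delta> + \<delta> \<le> \<epsilon>"
    proof -
      have "\<delta> + \<delta> \<le> r + (\<epsilon> - r)" unfolding \<delta>_def by (intro add_mono) auto
      thus ?thesis by simp
    qed
    obtain c where c: "c \<in> A" "a - \<delta> < c"
    proof (rule ccontr)
      assume "\<not> thesis"
      have "\<forall>c\<in>A. c \<le> a - \<delta>"
      proof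
        fix c assume "c \<in> A"
        show "c \<le> a - \<delta>" using that[OF \<open>c \<in> A\<close>] \<open>\<not> thesis\<close> by (meson not_less)
      qed
      hence "a \<le> a - \<delta>" by (rule a2)
      thus False using dpos by simp
    qed
    obtain e1 where e1: "e1 > 0" "\<forall>t. 0 < t \<and> t < e1 \<and> t < s \<longrightarrow> c < F x t" using c(1) A_def by blast
    obtain c0 d0 where cd: "c0 < 0" "0 < d0"
      "finite_union_points_intervals ({t. [t] \<in> dset 1 (\<lambda>w. 0 < w!0 \<and> w!0 < s \<and> a + \<delta> < F x (w!0))} \<inter> {c0<..<d0})"
      using assms(3) Xc[of "a + \<delta>"] unfolding locally_o_minimal_def by blast
    obtain e2 where e2: "e2 > 0"
      "(\<forall>t. 0 < t \<and> t < e2 \<longrightarrow> t \<in> {t. [t] \<in> dset 1 (\<lambda>w. 0 < w!0 \<and> w!0 < s \<and> a + \<delta> < F x (w!0))}) \<or>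
       (\<forall>t. 0 < t \<and> t < e2 \<longrightarrow> t \<notin> {t. [t] \<in> dset 1 (\<lambda>w. 0 < w!0 \<and> w!0 < s \<and> a + \<delta> < F x (w!0))})"
      using fupi_at0[OF cd] by blast
    have up: "\<forall>t. 0 < t \<and> t < e2 \<and> t < s \<longrightarrow> F x t \<le> a + \<delta>"
    proof (cases "\<forall>t. 0 < t \<and> t < e2 \<longrightarrow> t \<in> {t. [t] \<in> dset 1 (\<lambda>w. 0 < w!0 \<and> w!0 < s \<and> a + \<delta> < F x (w!0))}")
      case True
      hence "a + \<delta> \<in> A" unfolding A_def using e2(1) by auto
      hence "a + \<delta> \<le> a" by (rule a1)
      hence False using dpos by simp
      thus ?thesis ..
    next
      case False
      hence "\<forall>t. 0 < t \<and> t < e2 \<longrightarrow> t \<notin> {t. [t] \<in> dset 1 (\<lambda>w. 0 < w!0 \<and> w!0 < s \<and> a + \<delta> < F x (w!0))}"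
        using e2(2) by blast
      thus ?thesis by (auto simp: not_less)
    qed
    show ?thesis
    proof (intro exI[of _ "min s (min e1 e2)"] conjI allI impI)
      show "0 < min s (min e1 e2)" using assms(5) e1(1) e2(1) by simp
      show "min s (min e1 e2) \<le> s" by simp
      fix t t' assume tt: "0 < t \<and> t < min s (min e1 e2) \<and> 0 < t' \<and> t' < min s (min e1 e2)"
      have l: "a - \<delta> < F x t" "a - \<delta> < F x t'" using tt e1(2) c(2) by (auto intro: order_less_trans)
      have u: "F x t \<le> a + \<delta>" "F x t' \<le> a + \<delta>" using tt up by auto
      show "\<bar>F x t - F x t'\<bar> < \<epsilon>" by (rule absdiff[OF l(1) u(1) l(2) u(2) dd])
    qed
  qed
qed

end
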